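(* Let $X$ be a nonempty set and $\mathcal{B}$ a real vector space of bounded functions $X\to\mathbb{R}$ that is closed under pointwise multiplication, pointwise max and min, and satisfies $f\wedge 1\in\mathcal{B}$ for all $f\in\mathcal{B}$. Let $A(\mathcal{B})$ be the supremum-norm closure of $\mathcal{B}+i\mathcal{B}=\{f_1+if_2: f_1,f_2\in\mathcal{B}\}$. Then for every nonnegative real-valued function $f\in A(\mathcal{B})$ there exists a monotonically increasing sequence $(f_n)_n$ of nonnegative functions $f_n\in\mathcal{B}$ converging to $f$ pointwise on $X$. *)

theory Defs
  imports "HOL-Analysis.Analysis"
begin

text \<open>The ground set X is the type 'a (types are nonempty).
  A function space B of real-valued functions on X.\<close>

definition bounded_fun :: "('a \<Rightarrow> real) \<Rightarrow> bool" where
  "bounded_fun f \<longleftrightarrow> bounded (range f)"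

definition complexify :: "('a \<Rightarrow> real) set \<Rightarrow> ('a \<Rightarrow> complex) set" where
  "complexify B = {(\<lambda>x. complex_of_real (f1 x) + \<i> * complex_of_real (f2 x)) | f1 f2. f1 \<in> B \<and> f2 \<in> B}"

definition A_alg :: "('a \<Rightarrow> real) set \<Rightarrow> ('a \<Rightarrow> complex) set" where
  "A_alg B = {g. \<forall>e>0. \<exists>h\<in>complexify B. \<forall>x. cmod (g x - h x) \<le> e}"

end

theory Submission
  imports Defs
begin

theorem mainTheorem5:
  fixes B :: "('a \<Rightarrow> real) set" and f :: "'a \<Rightarrow> real"
  assumes bdd: "\<forall>g\<in>B. bounded_fun g"
    and zero: "(\<lambda>x. 0) \<in> B"
    and add: "\<forall>g\<in>B. \<forall>h\<in>B. (\<lambda>x. g x + h x) \<in> B"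
    and scale: "\<forall>g\<in>B. \<forall>c::real. (\<lambda>x. c * g x) \<in> B"
    and mult: "\<forall>g\<in>B. \<forall>h\<in>B. (\<lambda>x. g x * h x) \<in> B"
    and maxc: "\<forall>g\<in>B. \<forall>h\<in>B. (\<lambda>x. max (g x) (h x)) \<in> B"
    and minc: "\<forall>g\<in>B. \<forall>h\<in>B. (\<lambda>x. min (g x) (h x)) \<in> B"
    and min1: "\<forall>g\<in>B. (\<lambda>x. min (g x) 1) \<in> B"
    and fA: "(\<lambda>x. complex_of_real (f x)) \<in> A_alg B"
    and fnn: "\<forall>x. f x \<ge> 0"
  shows "\<exists>F :: nat \<Rightarrow> 'a \<Rightarrow> real.
           (\<forall>n. F n \<in> B) \<and> (\<forall>n x. F n x \<ge> 0) \<and>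
           (\<forall>n x. F n x \<le> F (Suc n) x) \<and>
           (\<forall>x. (\<lambda>n. F n x) \<longlonglongrightarrow> f x)"
proof -
  define e :: "nat \<Rightarrow> real" where "e n = 1 / real (Suc n)" for n
  have epos: "e n > 0" for n by (simp add: e_def)
  have "\<exists>g. g \<in> B \<and> (\<forall>x. \<bar>f x - g x\<bar> \<le> e n)" for n
  proof -
    from fA epos[of n] obtain h where h: "h \<in> complexify B"
      "\<forall>x. cmod (complex_of_real (f x) - h x) \<le> e n"
      unfolding A_alg_def by blast
    then obtain f1 f2 where f12: "f1 \<in> B" "f2 \<in> B"
      "h = (\<lambda>x. complex_of_real (f1 x) + \<i> * complex_of_real (f2 x))"
      unfolding complexify_def by blast
    have "\<bar>f x - f1 x\<bar> \<le> e n" for x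
    proof -
      have "\<bar>Re (complex_of_real (f x) - h x)\<bar> \<le> e n"
        using abs_Re_le_cmod order_trans h(2) by blast
      then show ?thesis using f12(3) by simp
    qed
    then show ?thesis using f12 by blast
  qed
  then obtain g where g: "\<And>n. g n \<in> B" "\<And>n x. \<bar>f x - g n x\<bar> \<le> e n" by metis
  define k where "k n = (\<lambda>x. max (g n x - e n) 0)" for n
  have kB: "k n \<in> B" for n
  proof -
    have s1: "(\<lambda>x. (1 / e n) * g n x) \<in> B" using scale g(1) by blast
    have s2: "(\<lambda>x. min ((1 / e n) * g n x) 1) \<in> B" using min1[rule_format, OF s1] by simp
    have s3: "(\<lambda>x. (- e n) * min ((1 / e n) * g n x) 1) \<in> B" using scale[rule_format, OF s2, of "- e n"] by simp
    have "(\<lambda>x. g n x + (- e n) * min ((1 / e n) * g n x) 1) \<in> B"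
      using add[rule_format, OF g(1)[of n] s3] by simp
    moreover have "(\<lambda>x. g n x + (- e n) * min ((1 / e n) * g n x) 1) = k n"
    proof
      fix x
      have ep: "e n > 0" by (rule epos)
      show "g n x + (- e n) * min ((1 / e n) * g n x) 1 = k n x"
      proof (cases "g n x \<ge> e n")
        case True
        then have "(1 / e n) * g n x \<ge> 1" using ep by (simp add: field_simps)
        then show ?thesis using True by (simp add: k_def)
      next
        case False
        then have "(1 / e n) * g n x < 1" using ep by (simp add: field_simps)
        then show ?thesis using False ep by (simp add: k_def)
      qed
    qed
    ultimately show ?thesis by simp
  qed
  have kle: "k n x \<le> f x" for n x using g(2)[of x n] fnn by (auto simp: k_def abs_le_iff)
  have kge: "k n x \<ge> f x - 2 * e n" for n x using g(2)[of x n] by (auto simp: k_def abs_le_iff)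
  define F where "F = rec_nat (k 0) (\<lambda>n Fn. (\<lambda>x. max (Fn x) (k (Suc n) x)))"
  have F0: "F 0 = k 0" and FS: "F (Suc n) = (\<lambda>x. max (F n x) (k (Suc n) x))" for n
    by (simp_all add: F_def)
  have FB: "F n \<in> B" for n
    by (induction n) (use kB maxc in \<open>simp_all add: F0 FS\<close>)
  have Fnn: "F n x \<ge> 0" for n x
    by (induction n) (auto simp: F0 FS k_def)
  have Fle: "F n x \<le> f x" for n x
    by (induction n) (auto simp: F0 FS kle)
  have Fge: "F n x \<ge> f x - 2 * e n" for n x
    by (cases n) (auto simp: F0 FS kge intro: max.coboundedI2)
  have Fmono: "F n x \<le> F (Suc n) x" for n x by (simp add: FS)
  have conv: "(\<lambda>n. F n x) \<longlonglongrightarrow> f x" for x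
  proof (rule tendsto_sandwich[of "\<lambda>n. f x - 2 * e n" _ _ "\<lambda>n. f x"])
    show "\<forall>\<^sub>F n in sequentially. f x - 2 * e n \<le> F n x" using Fge by simp
    show "\<forall>\<^sub>F n in sequentially. F n x \<le> f x" using Fle by simp
    show "(\<lambda>n. f x) \<longlonglongrightarrow> f x" by simp
    have "e \<longlonglongrightarrow> 0" unfolding e_def using LIMSEQ_inverse_real_of_nat
      by (simp add: inverse_eq_divide)
    then show "(\<lambda>n. f x - 2 * e n) \<longlonglongrightarrow> f x"
      using tendsto_diff[OF tendsto_const tendsto_mult[OF tendsto_const \<open>e \<longlonglongrightarrow> 0\<close>], of "f x" 2]
      by simp
  qed
  show ?thesis using FB Fnn Fmono conv by blast
qed

end
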